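(* Let $\mathcal{G}$ be a finite game in normal form and suppose each player $k$ uses a penalty function $h_k$ on $\mathcal{X}_k$ with induced choice map $Q_k$. Then the reinforcement learning process $$y_k(t)=y_k(0)+\int_0^t v_k(x(s))\,ds,\qquad x_k(t)=Q_k(y_k(t)),\qquad k\in\mathcal{N},$$ (equivalently $\dot y_k=v_k(Q(y))$) admits a unique global solution $y(t)$, $t\ge 0$, for every initial score profile $y(0)\in\mathcal{V}^*\equiv\prod_k\mathbb{R}^{\mathcal{A}_k}$.
   Context: A finite game $\mathcal{G}$ consists of a finite set of players $\mathcal{N}=\{1,\dots,N\}$, finite action sets $\mathcal{A}_k$, and payoff functions $u_k:\prod_\ell\mathcal{A}_\ell\to\mathbb{R}$, extended multilinearly to mixed strategy profiles $x=(x_1,\dots,x_N)\in\mathcal{X}=\prod_k\mathcal{X}_k$, $\mathcal{X}_k=\Delta(\mathcal{A}_k)$ the simplex in $\mathbb{R}^{\mathcal{A}_k}$. The payoff vector of player $k$ is $v_k(x)=(v_{k\alpha}(x))_{\alpha\in\mathcal{A}_k}$ with $v_{k\alpha}(x)=u_k(\alpha;x_{-k})$. A penalty function on a simplex $\Delta\subset\mathbb{R}^n$ is a function $h:\Delta\to\mathbb{R}$ that is continuous on $\Delta$, smooth ($C^\infty$) on the relative interior of every face of $\Delta$ (including $\Delta$), and strongly convex: there is $K>0$ with $h(tx_1+(1-t)x_2)\le th(x_1)+(1-t)h(x_2)-\tfrac12Kt(1-t)\|x_1-x_2\|^2$ for all $x_1,x_2\in\Delta$, $t\in[0,1]$ (for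 a fixed norm $\|\cdot\|$). Its induced choice map is $Q:\mathbb{R}^n\to\Delta$, $Q(y)=\arg\max_{x\in\Delta}\{\langle y,x\rangle-h(x)\}$. $Q=(Q_1,\dots,Q_N)$. *)

theory Defs
  imports "HOL-Analysis.Analysis"
begin

text \<open>Players are the elements of a finite type 'p; actions of all players are drawn from
a finite type 'a, player k having the nonempty action set A k.  A vector in R^{A_k} is
represented by an element of real^'a whose coordinates outside A k vanish.\<close>

definition score_space :: "'a set \<Rightarrow> (real^'a) set" where
  "score_space B = {y. \<forall>\<alpha>. \<alpha> \<notin> B \<longrightarrow> y$\<alpha> = 0}"

definition simplex_on :: "'a set \<Rightarrow> (real^'a) set" where
  "simplex_on B = {x. (\<forall>\<alpha>. 0 \<le> x$\<alpha>) \<and> (\<forall>\<alpha>. \<alpha> \<notin> B \<longrightarrow> x$\<alpha> = 0) \<and> (\<Sum>\<alpha>\<in>B. x$\<alpha>) = 1}"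

definition face_relint :: "'a set \<Rightarrow> (real^'a) set" where
  "face_relint B = {x. (\<forall>\<alpha>\<in>B. 0 < x$\<alpha>) \<and> (\<forall>\<alpha>. \<alpha> \<notin> B \<longrightarrow> x$\<alpha> = 0) \<and> (\<Sum>\<alpha>\<in>B. x$\<alpha>) = 1}"

fun Ck_on :: "nat \<Rightarrow> 'v::euclidean_space set \<Rightarrow> ('v \<Rightarrow> real) \<Rightarrow> bool" where
  "Ck_on 0 U f = continuous_on U f"
| "Ck_on (Suc n) U f = (f differentiable_on U \<and>
      (\<forall>b\<in>Basis. Ck_on n U (\<lambda>x. frechet_derivative f (at x) b)))"

definition smooth_on_open :: "'v::euclidean_space set \<Rightarrow> ('v \<Rightarrow> real) \<Rightarrow> bool" where
  "smooth_on_open U f = (open U \<and> (\<forall>n. Ck_on n U f))"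

definition smooth_on_set :: "'v::euclidean_space set \<Rightarrow> ('v \<Rightarrow> real) \<Rightarrow> bool" where
  "smooth_on_set S h = (\<exists>U g. S \<subseteq> U \<and> smooth_on_open U g \<and> (\<forall>x\<in>S. g x = h x))"

definition strongly_convex_on :: "'v::real_normed_vector set \<Rightarrow> real \<Rightarrow> ('v \<Rightarrow> real) \<Rightarrow> bool" where
  "strongly_convex_on S K h = (\<forall>x1\<in>S. \<forall>x2\<in>S. \<forall>t::real. 0 \<le> t \<and> t \<le> 1 \<longrightarrow>
      h (t *\<^sub>R x1 + (1 - t) *\<^sub>R x2) \<le> t * h x1 + (1 - t) * h x2 - K * t * (1 - t) * (norm (x1 - x2))\<^sup>2 / 2)"

definition penalty_function :: "'a::finite set \<Rightarrow> (real^'a \<Rightarrow> real) \<Rightarrow> bool" where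
  "penalty_function B h =
     (continuous_on (simplex_on B) h \<and>
      (\<forall>F. F \<subseteq> B \<and> F \<noteq> {} \<longrightarrow> smooth_on_set (face_relint F) h) \<and>
      (\<exists>K>0. strongly_convex_on (simplex_on B) K h))"

definition choice_map :: "'a::finite set \<Rightarrow> (real^'a \<Rightarrow> real) \<Rightarrow> real^'a \<Rightarrow> real^'a" where
  "choice_map B h y = (THE x. x \<in> simplex_on B \<and>
      (\<forall>x'\<in>simplex_on B. inner y x' - h x' \<le> inner y x - h x))"

definition mixed_payoff :: "('p::finite \<Rightarrow> 'a::finite set) \<Rightarrow> (('p \<Rightarrow> 'a) \<Rightarrow> real)
    \<Rightarrow> real^'a^'p \<Rightarrow> real" where
  "mixed_payoff A uk x = (\<Sum>\<beta>\<in>PiE UNIV A. uk \<beta> * (\<Prod>l\<in>UNIV. x$l$(\<beta> l)))"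

definition payoff_vector :: "('p::finite \<Rightarrow> 'a::finite set) \<Rightarrow> ('p \<Rightarrow> ('p \<Rightarrow> 'a) \<Rightarrow> real)
    \<Rightarrow> 'p \<Rightarrow> real^'a^'p \<Rightarrow> real^'a" where
  "payoff_vector A u k x = (\<chi> \<alpha>. if \<alpha> \<in> A k then
      mixed_payoff A (u k) (\<chi> l. if l = k then axis \<alpha> 1 else x$l) else 0)"

definition RL_field :: "('p::finite \<Rightarrow> 'a::finite set) \<Rightarrow> ('p \<Rightarrow> ('p \<Rightarrow> 'a) \<Rightarrow> real)
    \<Rightarrow> ('p \<Rightarrow> real^'a \<Rightarrow> real) \<Rightarrow> real^'a^'p \<Rightarrow> real^'a^'p" where
  "RL_field A u h y = (\<chi> k. payoff_vector A u k (\<chi> l. choice_map (A l) (h l) (y$l)))"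

end

theory Submission
  imports Defs
begin


lemma int_pow: "0 \<le> (t::real) \<Longrightarrow> ((\<lambda>s::real. s^n) has_integral t^(Suc n)/Suc n) {0..t}"
proof -
  assume t: "0 \<le> t"
  have "((\<lambda>s::real. s^n) has_integral ((\<lambda>s. s^(Suc n)/Suc n) t - (\<lambda>s. s^(Suc n)/Suc n) 0)) {0..t}"
  proof (rule fundamental_theorem_of_calculus[OF t])
    fix x :: real
    have "((\<lambda>s. s^(Suc n)/Suc n) has_real_derivative x^n) (at x)"
      by (intro derivative_eq_intros) (auto simp del: of_nat_Suc)
    then show "((\<lambda>s. s^(Suc n)/Suc n) has_vector_derivative x^n) (at x within {0..t})"
      by (simp add: has_real_derivative_iff_has_vector_derivative[symmetric] has_field_derivative_at_within)
  qed
  then show ?thesis by simp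
qed

lemma lip_cont:
  fixes F :: "'v::real_normed_vector \<Rightarrow> 'w::real_normed_vector"
  assumes lip: "\<And>x x'. norm (F x - F x') \<le> L * norm (x - x')" and L: "0 \<le> L"
  shows "continuous_on S F"
proof -
  have "\<exists>d>0. \<forall>x'\<in>S. dist x' x < d \<longrightarrow> dist (F x') (F x) < e" if "e > 0" for x e
  proof (intro exI[of _ "e/(L+1)"] conjI ballI impI)
    show "0 < e/(L+1)" using that L by simp
    fix x' assume "x' \<in> S" "dist x' x < e/(L+1)"
    have "dist (F x') (F x) \<le> L * dist x' x" using lip by (simp add: dist_norm)
    also have "\<dots> \<le> (L+1) * dist x' x" by (simp add: distrib_right)
    also have "\<dots> < (L+1) * (e/(L+1))" using \<open>dist x' x < e/(L+1)\<close> L by (intro mult_strict_left_mono) auto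
    also have "\<dots> = e" using L by simp
    finally show "dist (F x') (F x) < e" .
  qed
  then show ?thesis by (auto simp: continuous_on_iff)
qed

lemma step_est:
  fixes F :: "'v::euclidean_space \<Rightarrow> 'v"
  assumes lip: "\<And>x x'. norm (F x - F x') \<le> L * norm (x - x')" and L: "0 \<le> L"
    and t: "0 \<le> t" and ia: "((\<lambda>s. F (a s)) has_integral AA) {0..t}"
    and ic: "((\<lambda>s. F (c s)) has_integral CC) {0..t}"
    and b: "\<And>s. s\<in>{0..t} \<Longrightarrow> norm (a s - c s) \<le> Kc * s^n"
  shows "norm (AA - CC) \<le> L*Kc*t^(Suc n)/Suc n"
proof -
  have i1: "((\<lambda>s. F (a s) - F (c s)) has_integral (AA - CC)) {0..t}"
    by (rule has_integral_diff[OF ia ic])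
  have i2: "((\<lambda>s. L * Kc * s ^ n) has_integral (L*Kc*(t^(Suc n)/Suc n))) {0..t}"
    by (rule has_integral_mult_right[OF int_pow[OF t]])
  have "norm (integral {0..t} (\<lambda>s. F (a s) - F (c s))) \<le> integral {0..t} (\<lambda>s. L * Kc * s ^ n)"
  proof (rule integral_norm_bound_integral)
    show "(\<lambda>s. F (a s) - F (c s)) integrable_on {0..t}" using i1 by blast
    show "(\<lambda>s. L * Kc * s ^ n) integrable_on {0..t}" using i2 by blast
    fix s assume s: "s \<in> {0..t}"
    have "norm (F (a s) - F (c s)) \<le> L * norm (a s - c s)" by (rule lip)
    also have "\<dots> \<le> L * (Kc * s^n)" by (rule mult_left_mono[OF b[OF s] L])
    finally show "norm (F (a s) - F (c s)) \<le> L * Kc * s ^ n" by (simp add: mult.assoc)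
  qed
  then show ?thesis using integral_unique[OF i1] integral_unique[OF i2] by simp
qed

lemma base_est:
  fixes F :: "'v::euclidean_space \<Rightarrow> 'v"
  assumes bnd: "\<And>x. norm (F x) \<le> M" and t: "0 \<le> t"
    and ia: "((\<lambda>s. F (a s)) has_integral AA) {0..t}"
  shows "norm AA \<le> M * t"
proof -
  have M: "0 \<le> M" using bnd[of 0] norm_ge_zero order_trans by blast
  have "norm AA \<le> M * measure lborel (cbox 0 t)"
    by (rule has_integral_bound[OF M]) (use ia bnd in auto)
  then show ?thesis using t by simp
qed

primrec pic :: "('v::euclidean_space \<Rightarrow> 'v) \<Rightarrow> 'v \<Rightarrow> nat \<Rightarrow> real \<Rightarrow> 'v" where
  "pic F y0 0 = (\<lambda>t. y0)"
| "pic F y0 (Suc n) = (\<lambda>t. y0 + integral {0..t} (\<lambda>s. F (pic F y0 n s)))"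

lemma pic_cont:
  fixes F :: "'v::euclidean_space \<Rightarrow> 'v"
  assumes cF: "continuous_on UNIV F"
  shows "continuous_on {0..T} (pic F y0 n)"
proof (induction n)
  case 0 then show ?case by simp
next
  case (Suc n)
  have "(\<lambda>s. F (pic F y0 n s)) integrable_on {0..T}"
    by (rule integrable_continuous_interval, rule continuous_on_compose2[OF cF Suc]) auto
  then have "continuous_on {0..T} (\<lambda>x. integral {0..x} (\<lambda>s. F (pic F y0 n s)))"
    by (rule indefinite_integral_continuous_1)
  then show ?case by (auto intro!: continuous_intros)
qed

lemma pic_sol:
  fixes F :: "'v::euclidean_space \<Rightarrow> 'v"
  assumes cF: "continuous_on UNIV F"
  shows "((\<lambda>s. F (pic F y0 n s)) has_integral (pic F y0 (Suc n) t - y0)) {0..t}"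
proof -
  have "(\<lambda>s. F (pic F y0 n s)) integrable_on {0..t}"
    by (rule integrable_continuous_interval, rule continuous_on_compose2[OF cF pic_cont[OF cF]]) auto
  then show ?thesis by (simp add: integrable_integral)
qed

lemma ode_global:
  fixes F :: "'v::euclidean_space \<Rightarrow> 'v" and y0 :: 'v
  assumes lip: "\<And>x x'. norm (F x - F x') \<le> L * norm (x - x')" and L: "0 \<le> L"
    and bnd: "\<And>x. norm (F x) \<le> M"
  shows "\<exists>y :: real \<Rightarrow> 'v. (y 0 = y0 \<and> (\<forall>t\<ge>0. ((\<lambda>s. F (y s)) has_integral (y t - y0)) {0..t}))
         \<and> (\<forall>z :: real \<Rightarrow> 'v. (z 0 = y0 \<and> (\<forall>t\<ge>0. ((\<lambda>s. F (z s)) has_integral (z t - y0)) {0..t}))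
              \<longrightarrow> (\<forall>t\<ge>0. z t = y t))"
proof -
  have M: "0 \<le> M" using bnd[of 0] norm_ge_zero order_trans by blast
  have cF: "continuous_on UNIV F" by (rule lip_cont[OF lip L])
  define p where "p = pic F y0"
  define bd where "bd n t = M * L^n * t^(Suc n) / fact (Suc n)" for n and t :: real
  have sol: "((\<lambda>s. F (p n s)) has_integral (p (Suc n) t - y0)) {0..t}" for n t
    unfolding p_def by (rule pic_sol[OF cF])
  have bd_step: "L * (M * L^n / fact (Suc n)) * t^(Suc (Suc n)) / Suc (Suc n) = bd (Suc n) t" for n t
    unfolding bd_def by (simp add: field_simps del: of_nat_Suc)
  have bd0: "bd 0 t = M * t" for t unfolding bd_def by simp
  have bd_eq: "bd n s = (M * L^n / fact (Suc n)) * s^(Suc n)" for n s unfolding bd_def by simp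
  have D: "norm (p (Suc n) t - p n t) \<le> bd n t" if "0 \<le> t" for n t
    using that
  proof (induction n arbitrary: t)
    case 0
    have "norm (p (Suc 0) t - y0) \<le> M * t"
      by (rule base_est[OF bnd 0 sol]) 
    then show ?case by (simp add: bd0 p_def)
  next
    case (Suc n)
    have "norm ((p (Suc (Suc n)) t - y0) - (p (Suc n) t - y0)) \<le> L * (M * L^n / fact (Suc n)) * t^(Suc (Suc n)) / Suc (Suc n)"
      by (rule step_est[OF lip L Suc.prems sol sol]) (use Suc.IH bd_eq in auto)
    then have "norm ((p (Suc (Suc n)) t - y0) - (p (Suc n) t - y0)) \<le> bd (Suc n) t" by (simp only: bd_step)
    then show ?case by simp
  qed
  have W: "norm (z t - p n t) \<le> bd n t"
    if zs: "\<forall>t\<ge>0. ((\<lambda>s. F (z s)) has_integral (z t - y0)) {0..t}" and "0 \<le> t" for z n t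
    using that(2)
  proof (induction n arbitrary: t)
    case 0
    have "norm (z t - y0) \<le> M * t"
      by (rule base_est[OF bnd 0]) (use zs 0 in auto)
    then show ?case by (simp add: bd0 p_def)
  next
    case (Suc n)
    have "norm ((z t - y0) - (p (Suc n) t - y0)) \<le> L * (M * L^n / fact (Suc n)) * t^(Suc (Suc n)) / Suc (Suc n)"
      by (rule step_est[OF lip L Suc.prems _ sol]) (use Suc.IH bd_eq zs Suc.prems in auto)
    then have "norm ((z t - y0) - (p (Suc n) t - y0)) \<le> bd (Suc n) t" by (simp only: bd_step)
    then show ?case by simp
  qed
  have summ: "summable (\<lambda>n. bd n t)" if "0 \<le> t" for t
  proof (rule summable_comparison_test)
    show "summable (\<lambda>n. M * t * (inverse (fact n) * (L*t)^n))"
      by (intro summable_mult summable_exp)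
    show "\<exists>N. \<forall>n\<ge>N. norm (bd n t) \<le> M * t * (inverse (fact n) * (L*t)^n)"
    proof (intro exI allI impI)
      fix n :: nat
      have f: "fact n \<le> (fact (Suc n) :: real)" by (rule fact_mono) auto
      have nn: "0 \<le> M * t * (L*t)^n" using M L that by simp
      have "norm (bd n t) = M * t * (L*t)^n / fact (Suc n)"
        using M L that unfolding bd_def by (simp add: power_mult_distrib)
      also have "\<dots> \<le> M * t * (L*t)^n / fact n"
        by (rule divide_left_mono[OF f nn]) auto
      finally show "norm (bd n t) \<le> M * t * (inverse (fact n) * (L*t)^n)"
        by (simp add: field_simps)
    qed
  qed
  have bd_mono: "bd n s \<le> bd n T" if "0 \<le> s" "s \<le> T" for n s T
    unfolding bd_def using M L that
    by (intro divide_right_mono mult_left_mono power_mono) auto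
  define y where "y t = y0 + (\<Sum>i. p (Suc i) t - p i t)" for t
  have p_tel: "p n t = y0 + (\<Sum>i<n. p (Suc i) t - p i t)" for n t
    by (subst sum_lessThan_telescope) (simp add: p_def)
  have unif: "uniform_limit {0..T} p y sequentially" if "0 \<le> T" for T
  proof -
    have "uniform_limit {0..T} (\<lambda>n t. \<Sum>i<n. p (Suc i) t - p i t) (\<lambda>t. \<Sum>i. p (Suc i) t - p i t) sequentially"
    proof (rule Weierstrass_m_test[OF _ summ[OF that]])
      fix n x assume "x \<in> {0..T}"
      then show "norm (p (Suc n) x - p n x) \<le> bd n T"
        using D[of x n] bd_mono[of x T n] by auto
    qed
    then have U: "\<forall>\<^sub>F n in sequentially. \<forall>x\<in>{0..T}. dist (\<Sum>i<n. p (Suc i) x - p i x) (\<Sum>i. p (Suc i) x - p i x) < e"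
      if "e > 0" for e using that by (simp add: uniform_limit_iff)
    have dd: "dist (p n x) (y x) = dist (\<Sum>i<n. p (Suc i) x - p i x) (\<Sum>i. p (Suc i) x - p i x)" for n x
      by (subst p_tel) (simp only: y_def dist_add_cancel)
    show ?thesis
    proof (rule uniform_limitI)
      fix e :: real assume "0 < e"
      from U[OF this] show "\<forall>\<^sub>F n in sequentially. \<forall>x\<in>{0..T}. dist (p n x) (y x) < e"
        by (rule eventually_mono) (simp only: dd)
    qed
  qed
  have ptend: "(\<lambda>n. p n t) \<longlonglongrightarrow> y t" if "0 \<le> t" for t
  proof -
    have "uniform_limit {t} p y sequentially"
      by (rule uniform_limit_on_subset[OF unif[OF that]]) (use that in auto)
    then show ?thesis by simp
  qed
  have ysol: "((\<lambda>s. F (y s)) has_integral (y t - y0)) {0..t}" if t: "0 \<le> t" for t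
  proof -
    have ul: "uniform_limit {0..t} (\<lambda>n s. F (p n s)) (\<lambda>s. F (y s)) sequentially"
    proof (rule uniform_limitI)
      fix e :: real assume e: "0 < e"
      have "\<forall>\<^sub>F n in sequentially. \<forall>x\<in>{0..t}. dist (p n x) (y x) < e/(L+1)"
        by (rule uniform_limitD[OF unif[OF t]]) (use e L in simp)
      then show "\<forall>\<^sub>F n in sequentially. \<forall>x\<in>{0..t}. dist (F (p n x)) (F (y x)) < e"
      proof (rule eventually_mono, intro ballI)
        fix n x assume h: "\<forall>x\<in>{0..t}. dist (p n x) (y x) < e/(L+1)" and x: "x \<in> {0..t}"
        have "dist (F (p n x)) (F (y x)) \<le> L * dist (p n x) (y x)" using lip by (simp add: dist_norm)
        also have "\<dots> \<le> (L+1) * dist (p n x) (y x)" by (simp add: distrib_right)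
        also have "\<dots> < (L+1) * (e/(L+1))" using h x L by (intro mult_strict_left_mono) auto
        also have "\<dots> = e" using L by simp
        finally show "dist (F (p n x)) (F (y x)) < e" .
      qed
    qed
    have cont: "continuous_on {0..t} (\<lambda>s. F (p n s))" for n
      unfolding p_def by (rule continuous_on_compose2[OF cF pic_cont[OF cF]]) auto
    obtain I J where I: "\<And>n. ((\<lambda>s. F (p n s)) has_integral I n) {0..t}"
      and J: "((\<lambda>s. F (y s)) has_integral J) {0..t}" and IJ: "I \<longlonglongrightarrow> J"
      by (rule uniform_limit_integral[OF ul cont]) auto
    have "I = (\<lambda>n. p (Suc n) t - y0)" using has_integral_unique[OF I sol] by (intro ext)
    then have "(\<lambda>n. p (Suc n) t - y0) \<longlonglongrightarrow> J" using IJ by simp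
    moreover have "(\<lambda>n. p (Suc n) t - y0) \<longlonglongrightarrow> y t - y0"
      by (intro tendsto_diff tendsto_const) (rule LIMSEQ_Suc[OF ptend[OF t]])
    ultimately have "J = y t - y0" by (rule LIMSEQ_unique)
    then show ?thesis using J by simp
  qed
  have y0: "y 0 = y0"
    using base_est[OF bnd order_refl ysol[OF order_refl]] by simp
  have A: "y 0 = y0 \<and> (\<forall>t\<ge>0. ((\<lambda>s. F (y s)) has_integral (y t - y0)) {0..t})"
    using y0 ysol by blast
  have B: "\<forall>z. (z 0 = y0 \<and> (\<forall>t\<ge>0. ((\<lambda>s. F (z s)) has_integral (z t - y0)) {0..t}))
              \<longrightarrow> (\<forall>t\<ge>0. z t = y t)"
  proof (intro allI impI)
    fix z :: "real \<Rightarrow> 'v" and t :: real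
    assume hz: "z 0 = y0 \<and> (\<forall>t\<ge>0. ((\<lambda>s. F (z s)) has_integral (z t - y0)) {0..t})"
      and t: "0 \<le> t"
    have "(\<lambda>n. p n t - z t) \<longlonglongrightarrow> 0"
    proof (rule Lim_null_comparison[where g="\<lambda>n. bd n t"])
      show "\<forall>\<^sub>F n in sequentially. norm (p n t - z t) \<le> bd n t"
        using W[of z t] hz t by (simp add: norm_minus_commute)
      show "(\<lambda>n. bd n t) \<longlonglongrightarrow> 0" by (rule summable_LIMSEQ_zero[OF summ[OF t]])
    qed
    then have "(\<lambda>n. p n t) \<longlonglongrightarrow> z t" by (rule LIM_zero_cancel)
    then show "z t = y t" using ptend[OF t] by (rule LIMSEQ_unique)
  qed
  show ?thesis by (rule exI[of _ y], rule conjI[OF A B])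
qed


lemma simplex_entries:
  fixes B :: "'a::finite set"
  assumes "x \<in> simplex_on B" shows "0 \<le> x$\<alpha> \<and> x$\<alpha> \<le> 1"
proof -
  have nn: "\<forall>b. 0 \<le> x$b" and s: "(\<Sum>b\<in>B. x$b) = 1" and z: "\<forall>b. b \<notin> B \<longrightarrow> x$b = 0"
    using assms by (auto simp: simplex_on_def)
  show ?thesis
  proof (cases "\<alpha> \<in> B")
    case True
    have "x$\<alpha> \<le> (\<Sum>b\<in>B. x$b)" by (rule member_le_sum) (use True nn in auto)
    then show ?thesis using nn s by auto
  next
    case False then show ?thesis using z by auto
  qed
qed

lemma simplex_norm:
  fixes B :: "'a::finite set"
  assumes "x \<in> simplex_on B" shows "norm x \<le> 1"
proof -
  have nn: "\<forall>b. 0 \<le> x$b" and s: "(\<Sum>b\<in>B. x$b) = 1" and z: "\<forall>b. b \<notin> B \<longrightarrow> x$b = 0"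
    using assms by (auto simp: simplex_on_def)
  have "norm x \<le> (\<Sum>b\<in>UNIV. \<bar>x$b\<bar>)" by (rule norm_le_l1_cart)
  also have "\<dots> = (\<Sum>b\<in>UNIV. x$b)" using nn by simp
  also have "\<dots> = (\<Sum>b\<in>B. x$b)" by (rule sum.mono_neutral_right) (use z in auto)
  finally show ?thesis using s by simp
qed

lemma simplex_compact: "compact (simplex_on (B :: 'a::finite set))"
proof (subst compact_eq_bounded_closed, intro conjI)
  show "bounded (simplex_on B)" using simplex_norm by (auto simp: bounded_iff)
  have "simplex_on B = (\<Inter>b. {x. 0 \<le> x$b}) \<inter> (\<Inter>b\<in>-B. {x. x$b = 0}) \<inter> {x. (\<Sum>b\<in>B. x$b) = 1}"
    by (auto simp: simplex_on_def)
  moreover have "closed \<dots>"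
    by (intro closed_Int closed_INT ballI closed_Collect_le closed_Collect_eq continuous_intros)
  ultimately show "closed (simplex_on B)" by simp
qed

lemma simplex_ne: "B \<noteq> {} \<Longrightarrow> simplex_on (B :: 'a::finite set) \<noteq> {}"
proof -
  assume "B \<noteq> {}" then obtain b where b: "b \<in> B" by blast
  have "axis b 1 \<in> simplex_on B"
    using b by (auto simp: simplex_on_def axis_def if_distrib sum.delta cong: if_cong)
  then show ?thesis by blast
qed

lemma simplex_mid:
  assumes "x \<in> simplex_on B" "x' \<in> simplex_on B"
  shows "(1/2) *\<^sub>R x + (1 - 1/2) *\<^sub>R x' \<in> simplex_on (B :: 'a::finite set)"
  using assms by (auto simp: simplex_on_def sum.distrib sum_divide_distrib[symmetric])

lemma key_ineq:
  fixes B :: "'a::finite set"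
  assumes sc: "strongly_convex_on (simplex_on B) K h"
    and x: "x \<in> simplex_on B" and max: "\<forall>x'\<in>simplex_on B. inner y x' - h x' \<le> inner y x - h x"
    and x2: "x2 \<in> simplex_on B"
  shows "inner y x2 - h x2 + K/4 * (norm (x2 - x))\<^sup>2 \<le> inner y x - h x"
proof -
  let ?m = "(1/2) *\<^sub>R x2 + (1 - 1/2) *\<^sub>R x"
  have m: "?m \<in> simplex_on B" by (rule simplex_mid[OF x2 x])
  have hm: "h ?m \<le> 1/2 * h x2 + (1 - 1/2) * h x - K * (1/2) * (1 - 1/2) * (norm (x2 - x))\<^sup>2 / 2"
  proof -
    have "\<forall>t::real. 0 \<le> t \<and> t \<le> 1 \<longrightarrow> h (t *\<^sub>R x2 + (1 - t) *\<^sub>R x) \<le> t * h x2 + (1 - t) * h x - K * t * (1 - t) * (norm (x2 - x))\<^sup>2 / 2"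
      using sc x x2 unfolding strongly_convex_on_def by blast
    from this[rule_format, of "1/2"] show ?thesis by simp
  qed
  have im: "inner y ?m = 1/2 * inner y x2 + 1/2 * inner y x" by (simp add: inner_add_right)
  have "inner y ?m - h ?m \<le> inner y x - h x" using max m by blast
  then show ?thesis using hm im by simp
qed

lemma choice_map_max:
  fixes B :: "'a::finite set"
  assumes B: "B \<noteq> {}" and sc: "strongly_convex_on (simplex_on B) K h" and K: "K > 0"
    and hc: "continuous_on (simplex_on B) h"
  shows "choice_map B h y \<in> simplex_on B \<and>
      (\<forall>x'\<in>simplex_on B. inner y x' - h x' \<le> inner y (choice_map B h y) - h (choice_map B h y))"
proof -
  have "\<exists>x\<in>simplex_on B. \<forall>x'\<in>simplex_on B. inner y x' - h x' \<le> inner y x - h x"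
    by (rule continuous_attains_sup[OF simplex_compact simplex_ne[OF B]])
       (intro continuous_intros hc)
  then obtain x where x: "x \<in> simplex_on B" "\<forall>x'\<in>simplex_on B. inner y x' - h x' \<le> inner y x - h x"
    by blast
  have uniq: "x2 = x" if "x2 \<in> simplex_on B" "\<forall>x'\<in>simplex_on B. inner y x' - h x' \<le> inner y x2 - h x2" for x2
  proof -
    have "inner y x2 - h x2 + K/4 * (norm (x2 - x))\<^sup>2 \<le> inner y x - h x"
      by (rule key_ineq[OF sc x that(1)])
    moreover have "inner y x - h x \<le> inner y x2 - h x2" using that x by blast
    ultimately have "K/4 * (norm (x2 - x))\<^sup>2 \<le> 0" by simp
    then have "(norm (x2 - x))\<^sup>2 \<le> 0" using K by (simp add: mult_le_0_iff)
    then show ?thesis by simp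
  qed
  have "\<exists>!x. x \<in> simplex_on B \<and> (\<forall>x'\<in>simplex_on B. inner y x' - h x' \<le> inner y x - h x)"
    using x uniq by blast
  then show ?thesis unfolding choice_map_def by (rule theI')
qed

lemma choice_map_lip:
  fixes B :: "'a::finite set"
  assumes B: "B \<noteq> {}" and sc: "strongly_convex_on (simplex_on B) K h" and K: "K > 0"
    and hc: "continuous_on (simplex_on B) h"
  shows "norm (choice_map B h y - choice_map B h y') \<le> (2/K) * norm (y - y')"
proof -
  let ?x = "choice_map B h y" and ?x' = "choice_map B h y'"
  note m1 = choice_map_max[OF B sc K hc, of y] and m2 = choice_map_max[OF B sc K hc, of y']
  have i1: "inner y ?x' - h ?x' + K/4 * (norm (?x' - ?x))\<^sup>2 \<le> inner y ?x - h ?x"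
    using m1 m2 by (intro key_ineq[OF sc]) auto
  have i2: "inner y' ?x - h ?x + K/4 * (norm (?x - ?x'))\<^sup>2 \<le> inner y' ?x' - h ?x'"
    using m1 m2 by (intro key_ineq[OF sc]) auto
  have "inner (y - y') (?x - ?x') = inner y ?x - inner y ?x' - inner y' ?x + inner y' ?x'"
    by (simp add: inner_diff_left inner_diff_right)
  moreover have "norm (?x' - ?x) = norm (?x - ?x')" by (rule norm_minus_commute)
  ultimately have "K/2 * (norm (?x - ?x'))\<^sup>2 \<le> inner (y - y') (?x - ?x')" using i1 i2 by simp
  also have "\<dots> \<le> norm (y - y') * norm (?x - ?x')" by (rule norm_cauchy_schwarz)
  finally have *: "K/2 * (norm (?x - ?x'))\<^sup>2 \<le> norm (y - y') * norm (?x - ?x')" .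
  show ?thesis
  proof (cases "norm (?x - ?x') = 0")
    case True then show ?thesis using K by simp
  next
    case False
    then have pos: "norm (?x - ?x') > 0" by simp
    from * have "(K/2 * norm (?x - ?x')) * norm (?x - ?x') \<le> norm (y - y') * norm (?x - ?x')"
      by (simp add: power2_eq_square mult.assoc)
    then have "K/2 * norm (?x - ?x') \<le> norm (y - y')" using pos by simp
    then show ?thesis using K by (simp add: field_simps)
  qed
qed

lemma prod_diff_le:
  fixes a b :: "'i \<Rightarrow> real"
  assumes "finite I" "\<And>i. i\<in>I \<Longrightarrow> 0 \<le> a i \<and> a i \<le> 1" "\<And>i. i\<in>I \<Longrightarrow> 0 \<le> b i \<and> b i \<le> 1"
  shows "\<bar>prod a I - prod b I\<bar> \<le> (\<Sum>i\<in>I. \<bar>a i - b i\<bar>)"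
  using assms
proof (induction I rule: finite_induct)
  case empty then show ?case by simp
next
  case (insert i F)
  let ?PA = "prod a F" and ?PB = "prod b F"
  have PB: "0 \<le> ?PB" "?PB \<le> 1" using insert.prems by (auto intro: prod_nonneg prod_le_1)
  have ai: "0 \<le> a i" "a i \<le> 1" using insert.prems by auto
  have IH: "\<bar>?PA - ?PB\<bar> \<le> (\<Sum>i\<in>F. \<bar>a i - b i\<bar>)" using insert by auto
  have "prod a (insert i F) - prod b (insert i F) = a i * (?PA - ?PB) + (a i - b i) * ?PB"
    using insert by (simp add: algebra_simps)
  also have "\<bar>\<dots>\<bar> \<le> \<bar>a i\<bar> * \<bar>?PA - ?PB\<bar> + \<bar>a i - b i\<bar> * \<bar>?PB\<bar>"
    by (metis abs_mult abs_triangle_ineq)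
  also have "\<dots> \<le> 1 * \<bar>?PA - ?PB\<bar> + \<bar>a i - b i\<bar> * 1"
    using ai PB by (intro add_mono mult_mono) auto
  also have "\<dots> \<le> (\<Sum>i\<in>insert i F. \<bar>a i - b i\<bar>)" using IH insert by simp
  finally show ?case .
qed

lemma mp_lip:
  fixes x x' :: "real^'a::finite^'p::finite" and A :: "'p \<Rightarrow> 'a set" and uk :: "('p \<Rightarrow> 'a) \<Rightarrow> real" and \<delta> :: real
  assumes "\<And>l \<alpha>. 0 \<le> x$l$\<alpha> \<and> x$l$\<alpha> \<le> 1" "\<And>l \<alpha>. 0 \<le> x'$l$\<alpha> \<and> x'$l$\<alpha> \<le> 1"
    and d: "\<And>l \<alpha>. \<bar>x$l$\<alpha> - x'$l$\<alpha>\<bar> \<le> \<delta>"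
  shows "\<bar>mixed_payoff A uk x - mixed_payoff A uk x'\<bar> \<le> (\<Sum>\<beta>\<in>PiE UNIV A. \<bar>uk \<beta>\<bar>) * (CARD('p) * \<delta>)"
proof -
  have "mixed_payoff A uk x - mixed_payoff A uk x' =
        (\<Sum>\<beta>\<in>PiE UNIV A. uk \<beta> * ((\<Prod>l\<in>UNIV. x$l$(\<beta> l)) - (\<Prod>l\<in>UNIV. x'$l$(\<beta> l))))"
    unfolding mixed_payoff_def by (simp add: sum_subtractf right_diff_distrib)
  also have "\<bar>\<dots>\<bar> \<le> (\<Sum>\<beta>\<in>PiE UNIV A. \<bar>uk \<beta>\<bar> * \<bar>(\<Prod>l\<in>UNIV. x$l$(\<beta> l)) - (\<Prod>l\<in>UNIV. x'$l$(\<beta> l))\<bar>)"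
    by (rule order_trans[OF sum_abs]) (simp add: abs_mult)
  also have "\<dots> \<le> (\<Sum>\<beta>\<in>PiE UNIV A. \<bar>uk \<beta>\<bar> * (CARD('p) * \<delta>))"
  proof (rule sum_mono, rule mult_left_mono)
    fix \<beta> :: "'p \<Rightarrow> 'a"
    have "\<bar>(\<Prod>l\<in>UNIV. x$l$(\<beta> l)) - (\<Prod>l\<in>UNIV. x'$l$(\<beta> l))\<bar> \<le> (\<Sum>l\<in>UNIV. \<bar>x$l$(\<beta> l) - x'$l$(\<beta> l)\<bar>)"
      by (rule prod_diff_le) (use assms in auto)
    also have "\<dots> \<le> of_nat (card (UNIV::'p set)) * \<delta>" by (rule sum_bounded_above) (rule d)
    finally show "\<bar>(\<Prod>l\<in>UNIV. x$l$(\<beta> l)) - (\<Prod>l\<in>UNIV. x'$l$(\<beta> l))\<bar> \<le> CARD('p) * \<delta>" by simp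
  qed simp
  also have "\<dots> = (\<Sum>\<beta>\<in>PiE UNIV A. \<bar>uk \<beta>\<bar>) * (CARD('p) * \<delta>)" by (rule sum_distrib_right[symmetric])
  finally show ?thesis .
qed

lemma mp_bound:
  fixes x :: "real^'a::finite^'p::finite" and A :: "'p \<Rightarrow> 'a set" and uk :: "('p \<Rightarrow> 'a) \<Rightarrow> real"
  assumes "\<And>l \<alpha>. 0 \<le> x$l$\<alpha> \<and> x$l$\<alpha> \<le> 1"
  shows "\<bar>mixed_payoff A uk x\<bar> \<le> (\<Sum>\<beta>\<in>PiE UNIV A. \<bar>uk \<beta>\<bar>)"
proof -
  have "\<bar>mixed_payoff A uk x\<bar> \<le> (\<Sum>\<beta>\<in>PiE UNIV A. \<bar>uk \<beta>\<bar> * \<bar>\<Prod>l\<in>UNIV. x$l$(\<beta> l)\<bar>)"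
    unfolding mixed_payoff_def by (rule order_trans[OF sum_abs]) (simp add: abs_mult)
  also have "\<dots> \<le> (\<Sum>\<beta>\<in>PiE UNIV A. \<bar>uk \<beta>\<bar> * 1)"
  proof (rule sum_mono, rule mult_left_mono)
    fix \<beta> :: "'p \<Rightarrow> 'a"
    have "0 \<le> (\<Prod>l\<in>UNIV. x$l$(\<beta> l))" "(\<Prod>l\<in>UNIV. x$l$(\<beta> l)) \<le> 1"
      using assms by (auto intro: prod_nonneg prod_le_1)
    then show "\<bar>\<Prod>l\<in>UNIV. x$l$(\<beta> l)\<bar> \<le> 1" by simp
  qed simp
  finally show ?thesis by simp
qed

lemma norm_l1_2:
  fixes v :: "real^'a::finite^'p::finite" and c :: real
  assumes "\<And>k \<alpha>. \<bar>v$k$\<alpha>\<bar> \<le> c"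
  shows "norm v \<le> CARD('p) * (CARD('a) * c)"
proof -
  have "norm v \<le> (\<Sum>k\<in>UNIV. norm (v$k))"
    unfolding norm_vec_def by (rule L2_set_le_sum) simp
  also have "\<dots> \<le> of_nat (card (UNIV::'p set)) * (CARD('a) * c)"
  proof (rule sum_bounded_above)
    fix k :: 'p
    have "norm (v$k) \<le> (\<Sum>\<alpha>\<in>UNIV. \<bar>v$k$\<alpha>\<bar>)" by (rule norm_le_l1_cart)
    also have "\<dots> \<le> of_nat (card (UNIV::'a set)) * c" by (rule sum_bounded_above) (rule assms)
    finally show "norm (v$k) \<le> CARD('a) * c" by simp
  qed
  finally show ?thesis by simp
qed

theorem proposition3p1:
  fixes A :: "'p::finite \<Rightarrow> 'a::finite set"
    and u :: "'p \<Rightarrow> ('p \<Rightarrow> 'a) \<Rightarrow> real"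
    and h :: "'p \<Rightarrow> real^'a \<Rightarrow> real"
    and y0 :: "real^'a^'p"
  assumes "\<And>k. A k \<noteq> {}"
    and "\<And>k. penalty_function (A k) (h k)"
    and "\<And>k. y0$k \<in> score_space (A k)"
  shows "\<exists>y :: real \<Rightarrow> real^'a^'p.
           (y 0 = y0 \<and> (\<forall>t\<ge>0. ((\<lambda>s. RL_field A u h (y s)) has_integral (y t - y0)) {0..t}))
         \<and> (\<forall>z :: real \<Rightarrow> real^'a^'p.
              (z 0 = y0 \<and> (\<forall>t\<ge>0. ((\<lambda>s. RL_field A u h (z s)) has_integral (z t - y0)) {0..t}))
              \<longrightarrow> (\<forall>t\<ge>0. z t = y t))"
proof -
  have "\<forall>k. \<exists>K>0. strongly_convex_on (simplex_on (A k)) K (h k)"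
    using assms(2) unfolding penalty_function_def by blast
  then obtain Kf where Kf: "\<And>k. Kf k > 0" "\<And>k. strongly_convex_on (simplex_on (A k)) (Kf k) (h k)"
    by metis
  have hc: "\<And>k. continuous_on (simplex_on (A k)) (h k)"
    using assms(2) unfolding penalty_function_def by blast
  define X where "X y = (\<chi> l. choice_map (A l) (h l) (y$l))" for y :: "real^'a^'p"
  have XS: "X y $ l \<in> simplex_on (A l)" for y l
    unfolding X_def using choice_map_max[OF assms(1) Kf(2) Kf(1) hc] by simp
  have XE: "0 \<le> X y$l$\<alpha> \<and> X y$l$\<alpha> \<le> 1" for y l \<alpha> by (rule simplex_entries[OF XS])
  define Lq where "Lq = (\<Sum>l\<in>UNIV. 2 / Kf l)"
  have Lq: "2 / Kf l \<le> Lq" for l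
    unfolding Lq_def by (rule member_le_sum) (use Kf(1) less_imp_le in auto)
  have Lq0: "0 \<le> Lq" unfolding Lq_def using Kf(1) by (intro sum_nonneg) (simp add: less_imp_le)
  have XL: "\<bar>X y$l$\<alpha> - X y'$l$\<alpha>\<bar> \<le> Lq * norm (y - y')" for y y' l \<alpha>
  proof -
    have "\<bar>X y$l$\<alpha> - X y'$l$\<alpha>\<bar> \<le> norm (X y$l - X y'$l)"
      using component_le_norm_cart[of "X y$l - X y'$l" \<alpha>] by simp
    also have "\<dots> \<le> (2 / Kf l) * norm (y$l - y'$l)"
      unfolding X_def using choice_map_lip[OF assms(1) Kf(2) Kf(1) hc] by simp
    also have "\<dots> \<le> (2 / Kf l) * norm (y - y')"
    proof -
      have "norm ((y - y')$l) \<le> norm (y - y')" by (rule Finite_Cartesian_Product.norm_nth_le)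
      then show ?thesis using Kf(1)[of l] by (intro mult_left_mono) auto
    qed
    also have "\<dots> \<le> Lq * norm (y - y')" by (rule mult_right_mono[OF Lq]) simp
    finally show ?thesis .
  qed
  define Z where "Z y k \<alpha> = (\<chi> l. if l = k then axis \<alpha> 1 else X y$l)" for y :: "real^'a^'p" and k and \<alpha> :: 'a
  have ZE: "0 \<le> Z y k \<alpha> $l$\<beta> \<and> Z y k \<alpha> $l$\<beta> \<le> 1" for y k \<alpha> l \<beta>
    unfolding Z_def using XE by (auto simp: axis_def)
  have ZL: "\<bar>Z y k \<alpha> $l$\<beta> - Z y' k \<alpha> $l$\<beta>\<bar> \<le> Lq * norm (y - y')" for y y' k \<alpha> l \<beta>
    unfolding Z_def using XL Lq0 by auto
  have FE: "RL_field A u h y $ k $ \<alpha> = (if \<alpha> \<in> A k then mixed_payoff A (u k) (Z y k \<alpha>) else 0)" for y k \<alpha>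
    unfolding RL_field_def payoff_vector_def Z_def X_def by simp
  define Cu where "Cu = (\<Sum>k\<in>UNIV. \<Sum>\<beta>\<in>PiE UNIV A. \<bar>u k \<beta>\<bar>)"
  have Cu: "(\<Sum>\<beta>\<in>PiE UNIV A. \<bar>u k \<beta>\<bar>) \<le> Cu" for k
    unfolding Cu_def by (rule member_le_sum) (auto intro: sum_nonneg)
  have Cu0: "0 \<le> Cu" unfolding Cu_def by (auto intro: sum_nonneg)
  have bndc: "\<bar>RL_field A u h y $ k $ \<alpha>\<bar> \<le> Cu" for y k \<alpha>
  proof (cases "\<alpha> \<in> A k")
    case True
    have "\<bar>mixed_payoff A (u k) (Z y k \<alpha>)\<bar> \<le> (\<Sum>\<beta>\<in>PiE UNIV A. \<bar>u k \<beta>\<bar>)" by (rule mp_bound[OF ZE])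
    then show ?thesis using True Cu[of k] by (simp add: FE)
  next
    case False then show ?thesis using Cu0 by (simp add: FE)
  qed
  have lipc: "\<bar>(RL_field A u h y - RL_field A u h y') $ k $ \<alpha>\<bar> \<le> Cu * (CARD('p) * (Lq * norm (y - y')))" for y y' k \<alpha>
  proof (cases "\<alpha> \<in> A k")
    case True
    have "\<bar>mixed_payoff A (u k) (Z y k \<alpha>) - mixed_payoff A (u k) (Z y' k \<alpha>)\<bar>
          \<le> (\<Sum>\<beta>\<in>PiE UNIV A. \<bar>u k \<beta>\<bar>) * (CARD('p) * (Lq * norm (y - y')))"
      by (rule mp_lip[OF ZE ZE ZL])
    also have "\<dots> \<le> Cu * (CARD('p) * (Lq * norm (y - y')))"
      by (rule mult_right_mono[OF Cu]) (use Lq0 in simp)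
    finally show ?thesis using True by (simp add: FE)
  next
    case False then show ?thesis using Cu0 Lq0 by (simp add: FE)
  qed
  show ?thesis
  proof (rule ode_global)
    show "norm (RL_field A u h x - RL_field A u h x') \<le> (CARD('p) * (CARD('a) * (Cu * (CARD('p) * Lq)))) * norm (x - x')" for x x'
    proof -
      have "norm (RL_field A u h x - RL_field A u h x') \<le> CARD('p) * (CARD('a) * (Cu * (CARD('p) * (Lq * norm (x - x')))))"
        by (rule norm_l1_2[OF lipc])
      then show ?thesis by (simp only: mult.assoc)
    qed
    show "0 \<le> real CARD('p) * (CARD('a) * (Cu * (CARD('p) * Lq)))" using Cu0 Lq0 by simp
    show "norm (RL_field A u h x) \<le> CARD('p) * (CARD('a) * Cu)" for x
      by (rule norm_l1_2[OF bndc])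
  qed
qed

end
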